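(* For all $z\in\mathbb{C}\setminus\big((-\infty,-1]\cup[1,\infty)\big)$, $$z(1+z)\gamma(z)+z(1-z)\gamma(-z)=2z^3\gamma(z^2)-2z\log 2+(1+z)\log(1+z)-(1-z)\log(1-z).$$
   Context: $\gamma(z)$ is the generalized-Euler-constant function: for $|z|\le1$, $\gamma(z)=\sum_{n=1}^{\infty} z^{n-1}\left(\frac{1}{n}-\log\frac{n+1}{n}\right)$, and for $z\in\mathbb{C}\setminus[1,\infty)$ it denotes the analytic continuation $\gamma(z)=\int_0^1\frac{1-x+\log x}{(1-xz)\log x}\,dx$. $\log$ is the principal branch. *)

theory Defs
  imports "HOL-Analysis.Analysis"
begin

text \<open>Generalized Euler constant function, defined for z in C minus [1,inf) by
  gamma(z) = integral over [0,1] of (1 - x + log x) / ((1 - x z) log x) dx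
  (analytic continuation of sum z^(n-1) (1/n - log((n+1)/n)) from the unit disc).\<close>
definition gen_euler_gamma :: "complex \<Rightarrow> complex" where
  "gen_euler_gamma z =
     integral {0..1::real}
       (\<lambda>x. complex_of_real (1 - x + ln x) / ((1 - complex_of_real x * z) * complex_of_real (ln x)))"

end

theory Submission
  imports Defs "HOL-Real_Asymp.Real_Asymp"
begin


definition HH :: "real \<Rightarrow> real" where
  "HH x = (if x = 0 then 0 else if x = 1 then -1 else (1-x)/ln x)"

lemma HH_cont: "continuous_on {0..1} HH"
proof -
  have "continuous (at x within {0..1}) HH" if x: "x \<in> {0..1}" for x
  proof -
    consider "x = 0" | "x = 1" | "0 < x \<and> x < 1" using x by fastforce
    then show ?thesis
    proof cases
      case 1
      have lim: "((\<lambda>y::real. (1-y)/ln y) \<longlongrightarrow> 0) (at_right 0)" by real_asymp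
      have ev: "eventually (\<lambda>y. (1-y)/ln y = HH y) (at_right (0::real))"
        using eventually_at_right_real[of 0 "1::real"] by (auto elim!: eventually_mono simp: HH_def)
      have "(HH \<longlongrightarrow> 0) (at_right 0)"
        using tendsto_cong[OF ev] lim by simp
      moreover have "HH 0 = 0" by (simp add: HH_def)
      ultimately have "(HH \<longlongrightarrow> HH 0) (at_right 0)" by simp
      then show ?thesis using 1 by (simp add: continuous_within at_within_Icc_at_right)
    next
      case 2
      have lim: "((\<lambda>y::real. (1-y)/ln y) \<longlongrightarrow> -1) (at_left 1)" by real_asymp
      have ev: "eventually (\<lambda>y. (1-y)/ln y = HH y) (at_left (1::real))"
        using eventually_at_left_real[of 0 "1::real"] by (rule eventually_mono) (auto simp: HH_def)
      have "(HH \<longlongrightarrow> -1) (at_left 1)"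
        using tendsto_cong[OF ev] lim by simp
      moreover have "HH 1 = -1" by (simp add: HH_def)
      ultimately have "(HH \<longlongrightarrow> HH 1) (at_left 1)" by simp
      then show ?thesis using 2 by (simp add: continuous_within at_within_Icc_at_left)
    next
      case 3
      have ev: "eventually (\<lambda>y. (1-y)/ln y = HH y) (nhds x)"
        using eventually_nhds_in_open[of "{0<..<1}" x] 3 by (auto elim!: eventually_mono simp: HH_def)
      have "isCont (\<lambda>y. (1-y)/ln y) x" using 3 by (auto intro!: continuous_intros)
      then have "isCont HH x" using isCont_cong[OF ev] by simp
      then show ?thesis by (simp add: continuous_at_imp_continuous_at_within)
    qed
  qed
  then show ?thesis by (simp add: continuous_on_eq_continuous_within)
qed

lemma HH_sq: assumes "x \<in> {0..1::real}" shows "HH (x^2) = (1+x) * HH x / 2"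
proof -
  consider "x = 0" | "x = 1" | "0 < x \<and> x < 1" using assms by fastforce
  then show ?thesis
  proof cases
    case 3
    have "x*x < 1" using 3 mult_strict_mono[of x 1 x 1] by simp
    then have "x^2 \<noteq> 0" "x^2 \<noteq> 1" "ln x \<noteq> 0"
      using 3 by (auto simp: power2_eq_square)
    moreover have "ln (x^2) = 2 * ln x" using 3 by (simp add: ln_realpow)
    ultimately show ?thesis using 3 by (simp add: HH_def field_simps power2_eq_square)
  qed (auto simp: HH_def)
qed



lemma inner_s:
  assumes "x \<in> {0..1::real}"
  shows "integral {0..2} (\<lambda>s. x powr (1+s)) = - (x * (1+x) * HH x)"
proof -
  consider "x = 0" | "x = 1" | "0 < x \<and> x < 1" using assms by fastforce
  then show ?thesis
  proof cases
    case 1 then show ?thesis by (simp add: HH_def)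
  next
    case 2 then show ?thesis by (simp add: HH_def)
  next
    case 3
    have lnx: "ln x \<noteq> 0" using 3 by simp
    have "((\<lambda>s. x powr (1+s)) has_integral (exp ((1+2) * ln x) / ln x - exp ((1+0) * ln x) / ln x)) {0..2}"
    proof (rule fundamental_theorem_of_calculus)
      fix s :: real assume "s \<in> {0..2}"
      have "((\<lambda>s. exp ((1+s) * ln x) / ln x) has_real_derivative (exp ((1+s) * ln x))) (at s within {0..2})"
        using lnx by (auto intro!: derivative_eq_intros)
      moreover have "exp ((1+s) * ln x) = x powr (1+s)" using 3 by (simp add: powr_def)
      ultimately show "((\<lambda>s. exp ((1+s) * ln x) / ln x) has_vector_derivative x powr (1+s)) (at s within {0..2})"
        by (simp add: has_real_derivative_iff_has_vector_derivative)
    qed simp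
    moreover have "exp ((1+2) * ln x) = x^3" using 3 exp_of_nat_mult[of 3 "ln x"] by simp
    moreover have "exp ((1+0) * ln x) = x" using 3 by simp
    ultimately have "integral {0..2} (\<lambda>s. x powr (1+s)) = (x^3 - x) / ln x"
      by (simp add: integral_unique diff_divide_distrib)
    also have "\<dots> = - (x * (1+x) * HH x)" using 3 lnx
      by (simp add: HH_def field_simps power3_eq_cube)
    finally show ?thesis .
  qed
qed

lemma inner_x:
  assumes "s \<in> {0..2::real}"
  shows "integral {0..1} (\<lambda>x. x powr (1+s)) = 1 / (2+s)"
proof -
  have "((\<lambda>x. x powr (1+s)) has_integral (1 powr (1+s+1) / (1+s+1))) {0..1}"
    by (rule has_integral_powr_from_0) (use assms in auto)
  then show ?thesis by (simp add: integral_unique add_ac)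
qed

lemma log2_int: "integral {0..2} (\<lambda>s::real. 1 / (2+s)) = ln 2"
proof -
  have "((\<lambda>s::real. 1 / (2+s)) has_integral (ln (2+2) - ln (2+0))) {0..2}"
  proof (rule fundamental_theorem_of_calculus)
    fix s :: real assume s: "s \<in> {0..2}"
    have "((\<lambda>s. ln (2+s)) has_real_derivative (1 / (2+s))) (at s within {0..2})"
      using s by (auto intro!: derivative_eq_intros simp: field_simps)
    then show "((\<lambda>s. ln (2+s)) has_vector_derivative (1 / (2+s))) (at s within {0..2})"
      by (simp add: has_real_derivative_iff_has_vector_derivative)
  qed simp
  moreover have "ln (4::real) = 2 * ln 2"
    using ln_realpow[of 2 2] by simp
  ultimately show ?thesis by (simp add: integral_unique)
qed

lemma HH_integral: "integral {0..1} HH = - ln 2"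
proof -
  have sub: "((\<lambda>x. (2*x) *\<^sub>R HH (x^2)) has_integral (integral {0^2..1^2} HH)) {0..1::real}"
    by (rule has_integral_substitution[where c=0 and d=1])
       (auto intro!: derivative_eq_intros HH_cont simp: power_le_one)
  have eq: "(2*x) *\<^sub>R HH (x^2) = - integral {0..2} (\<lambda>s. x powr (1+s))" if "x \<in> {0..1}" for x
    using that by (simp add: HH_sq inner_s)
  have "integral {0..1} HH = integral {0..1} (\<lambda>x. - integral {0..2} (\<lambda>s. x powr (1+s)))"
  proof -
    have "integral {0..1} (\<lambda>x. (2*x) *\<^sub>R HH (x^2)) = integral {0..1} (\<lambda>x. - integral {0..2} (\<lambda>s. x powr (1+s)))"
      by (rule integral_cong) (use eq in auto)
    then show ?thesis using integral_unique[OF sub] by simp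
  qed
  also have "\<dots> = - integral {0..1} (\<lambda>x. integral {0..2} (\<lambda>s. x powr (1+s)))"
    by (simp add: integral_neg)
  also have "integral {0..1} (\<lambda>x. integral {0..2} (\<lambda>s. x powr (1+s)))
      = integral {0..2::real} (\<lambda>s. integral {0..1} (\<lambda>x. x powr (1+s)))"
  proof -
    have c: "continuous_on (cbox (0,0) (1,2)) (\<lambda>(x,s). x powr (1+s::real))"
    proof -
      have "continuous_on (cbox (0,0) (1::real,2::real)) (\<lambda>p. fst p powr (1 + snd p))"
        by (rule continuous_on_powr') (auto intro!: continuous_intros simp: cbox_Pair_iff)
      then show ?thesis by (simp add: case_prod_beta')
    qed
    show ?thesis using integral_swap_continuous[OF c] by simp
  qed
  also have "\<dots> = integral {0..2} (\<lambda>s::real. 1 / (2+s))"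
    by (rule integral_cong) (simp add: inner_x)
  finally show ?thesis by (simp add: log2_int)
qed



definition GG :: "complex \<Rightarrow> real \<Rightarrow> complex" where
  "GG w x = (1 + complex_of_real (HH x)) / (1 - complex_of_real x * w)"

definition okw :: "complex \<Rightarrow> bool" where "okw w \<longleftrightarrow> Im w \<noteq> 0 \<or> Re w < 1"

lemma okw_nonpos:
  assumes "okw w" "x \<in> {0..1::real}"
  shows "1 - complex_of_real x * w \<notin> \<real>\<^sub>\<le>\<^sub>0"
proof
  assume "1 - complex_of_real x * w \<in> \<real>\<^sub>\<le>\<^sub>0"
  then have h: "1 - x * Re w \<le> 0" "x * Im w = 0" by (auto simp: complex_nonpos_Reals_iff)
  show False
  proof (cases "Im w = 0")
    case True
    then have "Re w < 1" using assms(1) by (simp add: okw_def)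
    moreover have "x * Re w < 1"
    proof (cases "Re w \<ge> 0")
      case True
      then have "x * Re w \<le> 1 * Re w" using assms(2) by (intro mult_right_mono) auto
      then show ?thesis using \<open>Re w < 1\<close> by simp
    next
      case False
      then have "x * Re w \<le> 0" using assms(2) by (simp add: mult_nonneg_nonpos)
      then show ?thesis by simp
    qed
    then show False using h by simp
  next
    case False
    then have "x = 0" using h by simp
    then show False using h by simp
  qed
qed

lemma okw_nz:
  assumes "okw w" "x \<in> {0..1::real}"
  shows "1 - complex_of_real x * w \<noteq> 0"
  using okw_nonpos[OF assms] by auto

lemma GG_cont: assumes "okw w" shows "continuous_on {0..1} (GG w)"
proof -
  have c: "continuous_on {0..1} (\<lambda>x. complex_of_real (HH x))"
    using HH_cont by (intro continuous_intros)
  show ?thesis unfolding GG_def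
    apply (intro continuous_intros c)
    using okw_nz[OF assms] HH_cont by auto
qed

lemma GG_gamma: assumes "okw w" shows "(GG w has_integral gen_euler_gamma w) {0..1}"
proof -
  have int: "(GG w has_integral integral {0..1} (GG w)) {0..1}"
    using integrable_continuous_real[OF GG_cont[OF assms]] by (simp add: has_integral_integral)
  have "integral {0..1} (GG w) = gen_euler_gamma w"
    unfolding gen_euler_gamma_def
  proof (rule integral_spike[where S="{0}"])
    fix x assume x: "x \<in> {0..1::real} - {0}"
    show "complex_of_real (1 - x + ln x) / ((1 - complex_of_real x * w) * complex_of_real (ln x)) = GG w x"
    proof (cases "x = 1")
      case True then show ?thesis by (simp add: GG_def HH_def)
    next
      case False
      then have x1: "0 < x" "x < 1" using x by auto
      then have "ln x \<noteq> 0" by simp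
      then have "complex_of_real (ln x) \<noteq> 0" by simp
      have "1 + HH x = (1 - x + ln x) / ln x"
        using x1 \<open>ln x \<noteq> 0\<close> by (simp add: HH_def field_simps)
      then have "1 + complex_of_real (HH x) = complex_of_real (1 - x + ln x) / complex_of_real (ln x)"
        by (metis of_real_1 of_real_add of_real_divide)
      then show ?thesis by (simp add: GG_def)
    qed
  qed simp
  then show ?thesis using int by simp
qed

lemma log_int:
  assumes "okw w"
  shows "((\<lambda>x. w / (1 - complex_of_real x * w)) has_integral (- Ln (1 - w))) {0..1}"
proof -
  have "((\<lambda>x. w / (1 - complex_of_real x * w)) has_integral
          ((- Ln (1 - complex_of_real 1 * w)) - (- Ln (1 - complex_of_real 0 * w)))) {0..1}"
  proof (rule fundamental_theorem_of_calculus)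
    fix x :: real assume x: "x \<in> {0..1}"
    have "((\<lambda>u. - Ln (1 - u * w)) has_field_derivative (w / (1 - complex_of_real x * w))) (at (complex_of_real x))"
      using okw_nonpos[OF assms x] okw_nz[OF assms x]
      by (auto intro!: derivative_eq_intros simp: field_simps)
    then show "((\<lambda>x. - Ln (1 - complex_of_real x * w)) has_vector_derivative (w / (1 - complex_of_real x * w))) (at x within {0..1})"
      by (rule has_vector_derivative_real_field)
  qed simp
  then show ?thesis by simp
qed



lemma key:
  fixes a b :: complex
  assumes "a \<noteq> 0" "b \<noteq> 0" "p*b + q*a - r = s*b + t*a + u*(a*b)"
  shows "p/a + q/b - r/(a*b) = s/a + t/b + u"
proof -
  have "p/a + q/b - r/(a*b) = (p*b + q*a - r)/(a*b)" using assms(1,2) by (simp add: field_simps)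
  also have "\<dots> = (s*b + t*a + u*(a*b))/(a*b)" using assms(3) by simp
  also have "\<dots> = s/a + t/b + u" using assms(1,2) by (simp add: field_simps)
  finally show ?thesis .
qed

lemma pointwise:
  fixes z :: complex and x :: real
  assumes x: "x \<in> {0..1}" and a: "1 - complex_of_real x * z \<noteq> 0" and b: "1 - complex_of_real x * (-z) \<noteq> 0"
  shows "z*(1+z) * GG z x + z*(1-z) * GG (-z) x - 2*z^3 * ((2*x) *\<^sub>R GG (z^2) (x^2))
       = (1-z) * (z / (1 - complex_of_real x * z)) - (1+z) * ((-z) / (1 - complex_of_real x * (-z)))
         + 2*z * complex_of_real (HH x)"
proof -
  define X where "X = complex_of_real x"
  define h where "h = complex_of_real (HH x)"
  have hs: "complex_of_real (HH (x^2)) = (1+X)*h/2"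
  proof -
    have "complex_of_real (HH (x^2)) = complex_of_real ((1+x)*HH x/2)" by (simp only: HH_sq[OF x])
    then show ?thesis unfolding X_def h_def
      by (simp only: of_real_mult of_real_divide of_real_add of_real_1 of_real_numeral)
  qed
  have a': "1 - X*z \<noteq> 0" and b': "1 + X*z \<noteq> 0" using a b by (simp_all add: X_def)
  have ab: "1 - X*(X*(z*z)) \<noteq> 0"
  proof -
    have "1 - X*(X*(z*z)) = (1 - X*z) * (1 + X*z)" by (simp add: algebra_simps)
    then show ?thesis using a' b' by simp
  qed
  have "z*(1+z) * GG z x + z*(1-z) * GG (-z) x - 2*z^3 * ((2*x) *\<^sub>R GG (z^2) (x^2))
      = z*(1+z) * ((1+h)/(1-X*z)) + z*(1-z) * ((1+h)/(1+X*z)) - 2*z^3 * (2*X * ((1 + (1+X)*h/2) / (1 - X^2*z^2)))"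
    by (simp add: GG_def hs X_def h_def scaleR_conv_of_real)
  also have "\<dots> = (z*(1+z)*(1+h))/(1-X*z) + (z*(1-z)*(1+h))/(1+X*z) - (4*z^3*X + 2*z^3*X*(1+X)*h) / ((1 - X*z) * (1 + X*z))"
  proof -
    have D: "1 - X^2*z^2 = (1 - X*z) * (1 + X*z)" by (simp add: algebra_simps power2_eq_square)
    have N: "2*z^3 * (2*X * (1 + (1+X)*h/2)) = 4*z^3*X + 2*z^3*X*(1+X)*h"
      by (simp add: field_simps)
    have "2*z^3 * (2*X * ((1 + (1+X)*h/2) / (1 - X^2*z^2))) = (4*z^3*X + 2*z^3*X*(1+X)*h) / ((1 - X*z) * (1 + X*z))"
      by (simp only: times_divide_eq_right N D)
    moreover have "z*(1+z) * ((1+h)/(1-X*z)) = (z*(1+z)*(1+h))/(1-X*z)" by simp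
    moreover have "z*(1-z) * ((1+h)/(1+X*z)) = (z*(1-z)*(1+h))/(1+X*z)" by simp
    ultimately show ?thesis by simp
  qed
  also have "\<dots> = ((1-z)*z) / (1 - X*z) + ((1+z)*z) / (1 + X*z) + 2*z*h"
    by (rule key[OF a' b']) (simp add: algebra_simps power2_eq_square power3_eq_cube)
  also have "\<dots> = (1-z) * (z / (1 - X*z)) - (1+z) * ((-z) / (1 + X*z)) + 2*z*h"
    by simp
  finally show ?thesis by (simp add: X_def h_def)
qed

theorem theorem15:
  fixes z :: complex
  assumes "z \<notin> {w. Im w = 0 \<and> (Re w \<le> -1 \<or> Re w \<ge> 1)}"
  shows "z * (1 + z) * gen_euler_gamma z + z * (1 - z) * gen_euler_gamma (-z)
         = 2 * z ^ 3 * gen_euler_gamma (z ^ 2) - 2 * z * complex_of_real (ln 2)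
           + (1 + z) * Ln (1 + z) - (1 - z) * Ln (1 - z)"
proof -
  have hz: "Im z \<noteq> 0 \<or> (-1 < Re z \<and> Re z < 1)" using assms by auto
  have ok1: "okw z" and ok2: "okw (-z)" using hz by (auto simp: okw_def)
  have ok3: "okw (z^2)"
  proof (cases "Im z = 0")
    case True
    then have "-1 < Re z" "Re z < 1" using hz by auto
    then have "\<bar>Re z\<bar> < 1" by auto
    then have "Re z ^ 2 < 1" using abs_square_less_1 by blast
    then have "Re z * Re z < 1" by (simp add: power2_eq_square)
    then show ?thesis using True by (simp add: okw_def power2_eq_square)
  next
    case False
    show ?thesis
    proof (cases "Re z = 0")
      case True
      have "0 \<le> Im z * Im z" by simp
      then have "-1 < Im z * Im z" by linarith
      then show ?thesis using True by (simp add: okw_def power2_eq_square)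
    next
      case F2: False
      then show ?thesis using False by (simp add: okw_def power2_eq_square)
    qed
  qed
  have I1: "(GG z has_integral gen_euler_gamma z) {0..1}" by (rule GG_gamma[OF ok1])
  have I2: "(GG (-z) has_integral gen_euler_gamma (-z)) {0..1}" by (rule GG_gamma[OF ok2])
  have sub: "((\<lambda>x. (2*x) *\<^sub>R GG (z^2) (x^2)) has_integral (integral {0^2..1^2} (GG (z^2)))) {0..1::real}"
    by (rule has_integral_substitution[where c=0 and d=1])
       (auto intro!: derivative_eq_intros GG_cont ok3 simp: power_le_one)
  have I3: "((\<lambda>x. (2*x) *\<^sub>R GG (z^2) (x^2)) has_integral gen_euler_gamma (z^2)) {0..1::real}"
    using sub integral_unique[OF GG_gamma[OF ok3]] by simp
  have L: "((\<lambda>x. z*(1+z) * GG z x + z*(1-z) * GG (-z) x - 2*z^3 * ((2*x) *\<^sub>R GG (z^2) (x^2)))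
      has_integral (z*(1+z) * gen_euler_gamma z + z*(1-z) * gen_euler_gamma (-z) - 2*z^3 * gen_euler_gamma (z^2))) {0..1}"
    by (intro has_integral_add has_integral_diff has_integral_mult_right I1 I2 I3)
  have HHi: "(HH has_integral - ln 2) {0..1}"
    using integrable_continuous_real[OF HH_cont] HH_integral by (metis has_integral_integral)
  have R: "((\<lambda>x. (1-z) * (z / (1 - complex_of_real x * z)) - (1+z) * ((-z) / (1 - complex_of_real x * (-z)))
         + 2*z * complex_of_real (HH x))
      has_integral ((1-z) * (- Ln (1 - z)) - (1+z) * (- Ln (1 - (-z))) + 2*z * complex_of_real (- ln 2))) {0..1}"
    by (intro has_integral_add has_integral_diff has_integral_mult_right log_int ok1 ok2 has_integral_of_real HHi)
  have L': "((\<lambda>x. (1-z) * (z / (1 - complex_of_real x * z)) - (1+z) * ((-z) / (1 - complex_of_real x * (-z)))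
         + 2*z * complex_of_real (HH x))
      has_integral (z*(1+z) * gen_euler_gamma z + z*(1-z) * gen_euler_gamma (-z) - 2*z^3 * gen_euler_gamma (z^2))) {0..1}"
  proof (rule has_integral_eq[OF _ L])
    fix x :: real assume x: "x \<in> {0..1}"
    show "z*(1+z) * GG z x + z*(1-z) * GG (-z) x - 2*z^3 * ((2*x) *\<^sub>R GG (z^2) (x^2))
       = (1-z) * (z / (1 - complex_of_real x * z)) - (1+z) * ((-z) / (1 - complex_of_real x * (-z)))
         + 2*z * complex_of_real (HH x)"
      by (rule pointwise[OF x okw_nz[OF ok1 x] okw_nz[OF ok2 x]])
  qed
  from has_integral_unique[OF L' R] show ?thesis
    by (simp add: algebra_simps)
qed

end
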